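(* If $M$ is an arbitrarily divisible group, then the only recognizable subsets of $M$ are $\emptyset$ and $M$, i.e. $\mathrm{Rec}(M) = \{\emptyset, M\}$.
   Context: A monoid $M$ is arbitrarily divisible if for every $m \in M$ and every positive integer $k$ there exists $m_k \in M$ with $(m_k)^k = m$. A subset $S$ of a monoid $M$ is recognizable if there exist a finite monoid $N$, a monoid morphism $\varphi\colon M \to N$ and a subset $T \subseteq N$ with $S = \varphi^{-1}(T)$. $\mathrm{Rec}(M)$ denotes the set of recognizable subsets of $M$. *)

theory Defs
  imports "HOL-Algebra.Group"
begin

definition arbitrarily_divisible :: "('a, 'c) monoid_scheme \<Rightarrow> bool" where
  "arbitrarily_divisible M \<longleftrightarrow>
     (\<forall>m \<in> carrier M. \<forall>k::nat. k > 0 \<longrightarrow> (\<exists>mk \<in> carrier M. mk [^]\<^bsub>M\<^esub> k = m))"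

text \<open>Recognizable subsets. Every finite monoid is isomorphic to one whose
  carrier is a finite set of natural numbers, so quantifying over finite
  monoids with carrier in nat loses no generality.\<close>
definition recognizable :: "('a, 'c) monoid_scheme \<Rightarrow> 'a set \<Rightarrow> bool" where
  "recognizable M S \<longleftrightarrow>
     (\<exists>(N :: nat monoid) \<phi> T. monoid N \<and> finite (carrier N) \<and>
        \<phi> \<in> hom M N \<and> T \<subseteq> carrier N \<and>
        S = {x \<in> carrier M. \<phi> x \<in> T})"

definition Rec :: "('a, 'c) monoid_scheme \<Rightarrow> 'a set set" where
  "Rec M = {S. S \<subseteq> carrier M \<and> recognizable M S}"

end

theory Submission
  imports Defs
begin

lemma hom_const_pow:
  fixes M (structure)
  assumes G: "group M" and h: "\<phi> \<in> hom M N" and c: "c \<in> carrier M"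
    and e: "\<phi> c = \<phi> \<one>\<^bsub>M\<^esub>"
  shows "\<phi> (c [^]\<^bsub>M\<^esub> (q::nat)) = \<phi> \<one>\<^bsub>M\<^esub>"
proof (induction q)
  case 0 then show ?case by simp
next
  case (Suc q)
  interpret group M by fact
  have "\<phi> (c [^] Suc q) = \<phi> (c [^] q \<otimes> c)" by simp
  also have "\<dots> = \<phi> (c [^] q) \<otimes>\<^bsub>N\<^esub> \<phi> c" using h c by (simp add: hom_mult)
  also have "\<dots> = \<phi> \<one> \<otimes>\<^bsub>N\<^esub> \<phi> \<one>" using Suc e by simp
  also have "\<dots> = \<phi> (\<one> \<otimes> \<one>)" using hom_mult[OF h one_closed one_closed] by simp
  finally show ?case by simp
qed

lemma hom_period:
  fixes M (structure)
  assumes G: "group M" and h: "\<phi> \<in> hom M N" and fin: "finite (carrier N)"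
    and a: "a \<in> carrier M"
  shows "\<exists>p. 1 \<le> p \<and> p \<le> card (carrier N) \<and> \<phi> (a [^]\<^bsub>M\<^esub> p) = \<phi> \<one>\<^bsub>M\<^esub>"
proof -
  interpret group M by fact
  let ?n = "card (carrier N)"
  let ?f = "\<lambda>i::nat. \<phi> (a [^] i)"
  have sub: "?f ` {1..?n+1} \<subseteq> carrier N" using h a by (auto simp: hom_def)
  have "\<not> inj_on ?f {1..?n+1}"
  proof
    assume "inj_on ?f {1..?n+1}"
    then have "card (?f ` {1..?n+1}) = ?n + 1" by (simp add: card_image)
    moreover have "card (?f ` {1..?n+1}) \<le> ?n" using card_mono[OF fin sub] .
    ultimately show False by simp
  qed
  then obtain i j where ij: "i \<in> {1..?n+1}" "j \<in> {1..?n+1}" "i \<noteq> j" "?f i = ?f j"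
    unfolding inj_on_def by blast
  then obtain i j where ij: "i \<in> {1..?n+1}" "j \<in> {1..?n+1}" "i < j" "?f i = ?f j"
    by (metis linorder_neqE_nat)
  have aj: "a [^] j = a [^] (j - i) \<otimes> a [^] i" using ij a
    by (simp add: nat_pow_mult)
  have "\<phi> (a [^] (j - i)) = \<phi> (a [^] j \<otimes> inv (a [^] i))"
    using a by (simp add: aj m_assoc)
  also have "\<dots> = \<phi> (a [^] j) \<otimes>\<^bsub>N\<^esub> \<phi> (inv (a [^] i))" using h a by (simp add: hom_mult)
  also have "\<dots> = \<phi> (a [^] i) \<otimes>\<^bsub>N\<^esub> \<phi> (inv (a [^] i))" using ij by simp
  also have "\<dots> = \<phi> (a [^] i \<otimes> inv (a [^] i))"
    using hom_mult[OF h nat_pow_closed[OF a] inv_closed[OF nat_pow_closed[OF a]]] by simp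
  also have "\<dots> = \<phi> \<one>" using a by simp
  finally show ?thesis using ij by (intro exI[of _ "j - i"]) auto
qed

lemma div_root_fact:
  fixes M :: "('a, 'c) monoid_scheme" and n :: nat
  assumes ad: "\<forall>m \<in> carrier M. \<forall>k::nat. k > 0 \<longrightarrow> (\<exists>mk \<in> carrier M. mk [^]\<^bsub>M\<^esub> k = m)"
  and x: "x \<in> carrier M"
  shows "\<exists>mk \<in> carrier M. mk [^]\<^bsub>M\<^esub> (fact n :: nat) = x"
proof -
  have a: "\<forall>k::nat. k > 0 \<longrightarrow> (\<exists>mk \<in> carrier M. mk [^]\<^bsub>M\<^esub> k = x)" using ad x by (rule bspec)
  have f0: "(fact n :: nat) > 0" by simp
  show ?thesis using mp[OF spec[OF a, of "fact n"] f0] .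
qed

theorem proposition3:
  fixes M :: "('a, 'c) monoid_scheme"
  assumes "group M" and "arbitrarily_divisible M"
  shows "Rec M = {{}, carrier M}"
proof -
  interpret group M by fact
  define N :: "nat monoid" where "N = \<lparr>carrier = {0}, mult = (\<lambda>_ _. 0), one = 0\<rparr>"
  have N: "monoid N" unfolding N_def by (rule monoidI) auto
  have hN: "(\<lambda>_. 0) \<in> hom M N" unfolding N_def hom_def by auto
  have cN: "carrier N = {0}" by (simp add: N_def)
  have "recognizable M {}" unfolding recognizable_def
    by (rule exI[of _ N], rule exI[of _ "\<lambda>_. 0"], rule exI[of _ "{}"]) (simp add: N hN cN)
  moreover have "recognizable M (carrier M)" unfolding recognizable_def
    by (rule exI[of _ N], rule exI[of _ "\<lambda>_. 0"], rule exI[of _ "{0}"]) (simp add: N hN cN)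
  moreover have "S = {} \<or> S = carrier M" if rS: "recognizable M S" for S
  proof -
    obtain N' :: "nat monoid" and \<phi> T where *: "monoid N'" "finite (carrier N')"
      "\<phi> \<in> hom M N'" "T \<subseteq> carrier N'" "S = {x \<in> carrier M. \<phi> x \<in> T}"
      using rS unfolding recognizable_def by blast
    let ?n = "card (carrier N')"
    have const: "\<phi> x = \<phi> \<one>\<^bsub>M\<^esub>" if x: "x \<in> carrier M" for x
    proof -
      have ad: "\<forall>m \<in> carrier M. \<forall>k::nat. k > 0 \<longrightarrow> (\<exists>mk \<in> carrier M. mk [^]\<^bsub>M\<^esub> k = m)"
        using assms(2) unfolding arbitrarily_divisible_def .
      have f0: "fact ?n > (0::nat)" by simp
      have ex: "\<exists>mk \<in> carrier M. mk [^]\<^bsub>M\<^esub> (fact ?n :: nat) = x"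
        using div_root_fact[OF ad x, of "card (carrier N')"] .
      then obtain b where b: "b \<in> carrier M" "b [^]\<^bsub>M\<^esub> (fact ?n :: nat) = x"
        by (rule bexE)
      obtain p where p: "1 \<le> p" "p \<le> ?n" "\<phi> (b [^]\<^bsub>M\<^esub> p) = \<phi> \<one>\<^bsub>M\<^esub>"
        using hom_period[OF assms(1) *(3) *(2) b(1)] by blast
      have "p dvd fact ?n" using p by (simp add: dvd_fact)
      then obtain q where q: "(fact ?n :: nat) = p * q" by blast
      have "x = b [^]\<^bsub>M\<^esub> (fact ?n :: nat)" using b(2) by simp
      also have "\<dots> = b [^]\<^bsub>M\<^esub> (p * q)" using q by simp
      also have "\<dots> = (b [^]\<^bsub>M\<^esub> p) [^]\<^bsub>M\<^esub> q" using b(1) by (simp add: nat_pow_pow)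
      finally have xe: "x = (b [^]\<^bsub>M\<^esub> p) [^]\<^bsub>M\<^esub> q" .
      have "\<phi> ((b [^]\<^bsub>M\<^esub> p) [^]\<^bsub>M\<^esub> q) = \<phi> \<one>\<^bsub>M\<^esub>"
        by (rule hom_const_pow[OF assms(1) *(3) nat_pow_closed[OF b(1)] p(3)])
      then show ?thesis using xe by simp
    qed
    show ?thesis
    proof (cases "\<phi> \<one>\<^bsub>M\<^esub> \<in> T")
      case True
      have "{x \<in> carrier M. \<phi> x \<in> T} = carrier M"
      proof (rule Set.set_eqI, rule iffI)
        fix x assume "x \<in> {x \<in> carrier M. \<phi> x \<in> T}"
        then show "x \<in> carrier M" by simp
      next
        fix x assume xc: "x \<in> carrier M"
        then have "\<phi> x \<in> T" using const[OF xc] True by simp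
        then show "x \<in> {x \<in> carrier M. \<phi> x \<in> T}" using xc by simp
      qed
      then have "S = carrier M" using *(5) by simp
      then show ?thesis by blast
    next
      case False
      have "{x \<in> carrier M. \<phi> x \<in> T} = {}"
      proof (rule Set.set_eqI, rule iffI)
        fix x assume xc: "x \<in> {x \<in> carrier M. \<phi> x \<in> T}"
        then have "\<phi> x \<in> T" "x \<in> carrier M" by simp_all
        then show "x \<in> {}" using const[of x] False by simp
      qed simp
      then have "S = {}" using *(5) by simp
      then show ?thesis by blast
    qed
  qed
  ultimately show ?thesis unfolding Rec_def by auto
qed

end
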